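(* Let $G$ be a finite non-abelian group such that $G/Z(G)\cong C_2\times C_2\times C_2$. Then the non-centralizer graph $\Upsilon_G$ is regular if and only if $[G:C_G(x)]=4$ for all $x\in G\setminus Z(G)$.
   Context: For a finite group $G$, $C_G(x)$ denotes the centralizer of $x\in G$ and $Z(G)$ the center. The non-centralizer graph $\Upsilon_G$ is the simple graph with vertex set $G$ in which two distinct vertices $x,y$ are adjacent if and only if $C_G(x)\neq C_G(y)$. A graph is regular if all its vertices have the same degree. *)

theory Defs
  imports "HOL-Algebra.Algebra"
begin

definition centralizer :: "('a, 'b) monoid_scheme \<Rightarrow> 'a \<Rightarrow> 'a set" where
  "centralizer G x = {y \<in> carrier G. x \<otimes>\<^bsub>G\<^esub> y = y \<otimes>\<^bsub>G\<^esub> x}"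

definition center :: "('a, 'b) monoid_scheme \<Rightarrow> 'a set" where
  "center G = {z \<in> carrier G. \<forall>y \<in> carrier G. z \<otimes>\<^bsub>G\<^esub> y = y \<otimes>\<^bsub>G\<^esub> z}"

definition noncent_adj :: "('a, 'b) monoid_scheme \<Rightarrow> 'a \<Rightarrow> 'a \<Rightarrow> bool" where
  "noncent_adj G x y \<longleftrightarrow> x \<noteq> y \<and> centralizer G x \<noteq> centralizer G y"

definition noncent_degree :: "('a, 'b) monoid_scheme \<Rightarrow> 'a \<Rightarrow> nat" where
  "noncent_degree G x = card {y \<in> carrier G. noncent_adj G x y}"

definition noncent_regular :: "('a, 'b) monoid_scheme \<Rightarrow> bool" where
  "noncent_regular G \<longleftrightarrow>
     (\<forall>x \<in> carrier G. \<forall>y \<in> carrier G. noncent_degree G x = noncent_degree G y)"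

definition group_index :: "('a, 'b) monoid_scheme \<Rightarrow> 'a set \<Rightarrow> nat" where
  "group_index G H = card (rcosets\<^bsub>G\<^esub> H)"

end

theory Submission imports Defs begin

context group begin

lemma card_subgroup_dvd:
  assumes "subgroup K G" "subgroup H G" "K \<subseteq> H"
  shows "card K dvd card H"
proof -
  interpret H: group "G\<lparr>carrier := H\<rparr>" using assms(2) by (rule subgroup_imp_group)
  have "subgroup K (G\<lparr>carrier := H\<rparr>)" using subgroup_incl assms by blast
  from H.lagrange[OF this] have "card (rcosets\<^bsub>G\<lparr>carrier := H\<rparr>\<^esub> K) * card K = card H" by (simp add: order_def)
  thus ?thesis by (metis dvd_triv_right)
qed

lemma inv_commute:
  assumes "a \<in> carrier G" "y \<in> carrier G" "a \<otimes> y = y \<otimes> a"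
  shows "inv a \<otimes> y = y \<otimes> inv a"
proof -
  have 1: "inv a \<otimes> y = inv a \<otimes> (y \<otimes> a) \<otimes> inv a" using assms(1,2) by (simp add: m_assoc)
  have 3: "inv a \<otimes> (a \<otimes> y) \<otimes> inv a = y \<otimes> inv a" using assms(1,2) by (simp add: m_assoc[symmetric])
  show ?thesis using 1 3 assms(3) by simp
qed

lemma mult_commute2:
  assumes "a \<in> carrier G" "b \<in> carrier G" "y \<in> carrier G" "a \<otimes> y = y \<otimes> a" "b \<otimes> y = y \<otimes> b"
  shows "a \<otimes> b \<otimes> y = y \<otimes> (a \<otimes> b)"
proof -
  have 1: "a \<otimes> b \<otimes> y = a \<otimes> (b \<otimes> y)" using assms(1-3) by (simp add: m_assoc)
  have 2: "a \<otimes> (y \<otimes> b) = (a \<otimes> y) \<otimes> b" using assms(1-3) by (simp add: m_assoc)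
  have 3: "(y \<otimes> a) \<otimes> b = y \<otimes> (a \<otimes> b)" using assms(1-3) by (simp add: m_assoc)
  show ?thesis using 1 2 3 assms(4,5) by simp
qed

lemma center_sub: "subgroup (center G) G"
proof (rule subgroupI)
  show "center G \<subseteq> carrier G" by (auto simp: center_def)
  show "center G \<noteq> {}" using one_closed by (auto simp: center_def)
  fix a assume a: "a \<in> center G"
  hence ac: "a \<in> carrier G" and ay: "\<And>y. y \<in> carrier G \<Longrightarrow> a \<otimes> y = y \<otimes> a"
    by (auto simp: center_def)
  have "inv a \<otimes> y = y \<otimes> inv a" if "y \<in> carrier G" for y
    by (rule inv_commute[OF ac that ay[OF that]])
  thus "inv a \<in> center G" using ac unfolding center_def by blast
  fix b assume b: "b \<in> center G"
  hence bc: "b \<in> carrier G" and by': "\<And>y. y \<in> carrier G \<Longrightarrow> b \<otimes> y = y \<otimes> b"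
    by (auto simp: center_def)
  have "a \<otimes> b \<otimes> y = y \<otimes> (a \<otimes> b)" if "y \<in> carrier G" for y
    by (rule mult_commute2[OF ac bc that ay[OF that] by'[OF that]])
  thus "a \<otimes> b \<in> center G" using ac bc unfolding center_def by blast
qed

lemma centralizer_sub: "x \<in> carrier G \<Longrightarrow> subgroup (centralizer G x) G"
proof (rule subgroupI)
  assume x: "x \<in> carrier G"
  show "centralizer G x \<subseteq> carrier G" by (auto simp: centralizer_def)
  show "centralizer G x \<noteq> {}" using one_closed x by (auto simp: centralizer_def)
  fix a assume a: "a \<in> centralizer G x"
  hence ac: "a \<in> carrier G" and ax: "a \<otimes> x = x \<otimes> a" by (auto simp: centralizer_def)
  have "inv a \<otimes> x = x \<otimes> inv a" by (rule inv_commute[OF ac x ax])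
  thus "inv a \<in> centralizer G x" using ac unfolding centralizer_def by auto
  fix b assume b: "b \<in> centralizer G x"
  hence bc: "b \<in> carrier G" and bx: "b \<otimes> x = x \<otimes> b" by (auto simp: centralizer_def)
  have "a \<otimes> b \<otimes> x = x \<otimes> (a \<otimes> b)" by (rule mult_commute2[OF ac bc x ax bx])
  thus "a \<otimes> b \<in> centralizer G x" using ac bc unfolding centralizer_def by auto
qed

lemma center_in_cent: "x \<in> carrier G \<Longrightarrow> center G \<subseteq> centralizer G x"
  by (auto simp: center_def centralizer_def)

lemma x_in_cent: "x \<in> carrier G \<Longrightarrow> x \<in> centralizer G x"
  by (auto simp: centralizer_def)

lemma cent_carrier_iff: "y \<in> carrier G \<Longrightarrow> centralizer G y = carrier G \<longleftrightarrow> y \<in> center G"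
  by (auto simp: center_def centralizer_def)

lemma cent_mult_center:
  assumes "x \<in> carrier G" "z \<in> center G"
  shows "centralizer G (x \<otimes> z) = centralizer G x"
proof -
  have zc: "z \<in> carrier G" using assms by (auto simp: center_def)
  have "(x \<otimes> z) \<otimes> y = y \<otimes> (x \<otimes> z) \<longleftrightarrow> x \<otimes> y = y \<otimes> x" if y: "y \<in> carrier G" for y
  proof -
    have zy: "z \<otimes> y = y \<otimes> z" using assms(2) y by (auto simp: center_def)
    have "(x \<otimes> z) \<otimes> y = x \<otimes> (z \<otimes> y)" using assms y zc by (simp add: m_assoc)
    also have "\<dots> = (x \<otimes> y) \<otimes> z" using assms y zc zy by (simp add: m_assoc)
    finally have "(x \<otimes> z) \<otimes> y = (x \<otimes> y) \<otimes> z" .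
    moreover have "y \<otimes> (x \<otimes> z) = (y \<otimes> x) \<otimes> z" using assms y zc by (simp add: m_assoc)
    ultimately show ?thesis using assms y zc by simp
  qed
  then show ?thesis by (auto simp: centralizer_def)
qed

lemma card_lcoset:
  assumes "x \<in> carrier G" "A \<subseteq> carrier G"
  shows "card ((\<lambda>z. x \<otimes> z) ` A) = card A"
  apply (rule card_image)
  using assms by (auto simp: inj_on_def subset_iff)

end

locale thm_ctx = group +
  assumes fin: "finite (carrier G)"
    and ord8: "order G = 8 * card (center G)"
begin

abbreviation "Z \<equiv> center G"
abbreviation "n \<equiv> card (center G)"
abbreviation "C \<equiv> centralizer G"
definition "S x = {y \<in> carrier G. C y = C x}"

lemma Zsub: "Z \<subseteq> carrier G" by (auto simp: center_def)
lemma finZ: "finite Z" using Zsub fin finite_subset by blast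
lemma npos: "n > 0" using finZ center_sub subgroup.one_closed card_gt_0_iff by blast
lemma finC: "finite (C x)" using fin by (rule finite_subset[rotated]) (auto simp: centralizer_def)

lemma kset:
  assumes x: "x \<in> carrier G" "x \<notin> Z"
  shows "\<exists>k. card (C x) = n * k \<and> (k = 2 \<or> k = 4) \<and> group_index G (C x) * k = 8"
proof -
  have sg: "subgroup (C x) G" using centralizer_sub x by blast
  have "n dvd card (C x)" using card_subgroup_dvd[OF center_sub sg center_in_cent[OF x(1)]] .
  then obtain k where k: "card (C x) = n * k" by blast
  have lag: "group_index G (C x) * card (C x) = 8 * n"
    using lagrange[OF sg] ord8 by (simp add: group_index_def)
  hence "n * (group_index G (C x) * k) = n * 8" using k by (simp add: ac_simps)
  hence i: "group_index G (C x) * k = 8" using npos by simp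
  have d: "Z \<inter> (\<lambda>z. x \<otimes> z) ` Z = {}"
  proof (rule ccontr)
    assume "Z \<inter> (\<lambda>z. x \<otimes> z) ` Z \<noteq> {}"
    then obtain z where z: "z \<in> Z" "x \<otimes> z \<in> Z" by blast
    hence "x \<otimes> z \<otimes> inv z \<in> Z" using center_sub by (meson subgroup.m_closed subgroup.m_inv_closed)
    moreover have "x \<otimes> z \<otimes> inv z = x" using z(1) x(1) Zsub by (auto simp: m_assoc)
    ultimately show False using x(2) by simp
  qed
  have sub: "Z \<union> (\<lambda>z. x \<otimes> z) ` Z \<subseteq> C x"
    using center_in_cent[OF x(1)] x_in_cent[OF x(1)] sg
    by (auto intro!: subgroup.m_closed)
  have "card (Z \<union> (\<lambda>z. x \<otimes> z) ` Z) = 2 * n"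
    using card_Un_disjoint[OF finZ _ d] finZ card_lcoset[OF x(1) Zsub] by simp
  hence "2 * n \<le> card (C x)" using card_mono[OF finC sub] by simp
  hence k2: "k \<ge> 2" using k npos by simp
  have "C x \<noteq> carrier G" using cent_carrier_iff x by blast
  moreover have "C x \<subseteq> carrier G" using sg subgroup.subset by blast
  ultimately have "card (C x) < card (carrier G)" using fin by (intro psubset_card_mono) auto
  hence "card (C x) < 8 * n" using ord8 by (simp add: order_def)
  hence "k < 8" using k by simp
  moreover have "k dvd 8" using i by (metis dvd_triv_right)
  ultimately have "k = 2 \<or> k = 4" using k2
  proof -
    assume "k < 8" "k dvd 8" "2 \<le> k"
    hence "k \<in> {2,3,4,5,6,7}" by auto
    thus ?thesis using \<open>k dvd 8\<close> by auto
  qed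
  thus ?thesis using k i by blast
qed


lemma deg: assumes "x \<in> carrier G" shows "noncent_degree G x = order G - card (S x)"
proof -
  have "{y \<in> carrier G. noncent_adj G x y} = carrier G - S x"
    by (auto simp: noncent_adj_def S_def)
  moreover have "S x \<subseteq> carrier G" by (auto simp: S_def)
  ultimately show ?thesis using fin by (simp add: noncent_degree_def card_Diff_subset finite_subset order_def)
qed

lemma S_le: "card (S x) \<le> order G"
  unfolding order_def S_def by (rule card_mono[OF fin]) auto

lemma S_center: assumes "z \<in> Z" shows "S z = Z"
proof -
  have "C z = carrier G" using assms Zsub cent_carrier_iff by blast
  thus ?thesis using cent_carrier_iff Zsub unfolding S_def by auto
qed

lemma coset_S: assumes "x \<in> carrier G" shows "(\<lambda>z. x \<otimes> z) ` Z \<subseteq> S x"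
  using assms Zsub cent_mult_center by (auto simp: S_def)

lemma S_sub: assumes "x \<in> carrier G" "x \<notin> Z" shows "S x \<subseteq> C x - Z"
proof
  fix y assume y: "y \<in> S x"
  hence yc: "y \<in> carrier G" and e: "C y = C x" by (auto simp: S_def)
  have "y \<in> C x" using x_in_cent[OF yc] e by simp
  moreover have "y \<notin> Z" using e cent_carrier_iff[OF yc] cent_carrier_iff[OF assms(1)] assms(2) by simp
  ultimately show "y \<in> C x - Z" by blast
qed

lemma k2: assumes "x \<in> carrier G" "x \<notin> Z" "card (C x) = n * 2" shows "card (S x) = n"
proof -
  have "card (C x - Z) = n" using assms(3) card_Diff_subset[OF finZ center_in_cent[OF assms(1)]] by simp
  moreover have "finite (C x - Z)" using finC by simp
  ultimately have "card (S x) \<le> n" using card_mono[OF _ S_sub[OF assms(1,2)]] by simp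
  moreover have "finite (S x)" using fin by (auto simp: S_def)
  hence "n \<le> card (S x)" using card_mono[OF _ coset_S[OF assms(1)]] card_lcoset[OF assms(1) Zsub] by simp
  ultimately show ?thesis by simp
qed


lemma disj0: assumes x: "x \<in> carrier G" "x \<notin> Z" shows "Z \<inter> (\<lambda>z. x \<otimes> z) ` Z = {}"
proof (rule ccontr)
  assume "Z \<inter> (\<lambda>z. x \<otimes> z) ` Z \<noteq> {}"
  then obtain z where z: "z \<in> Z" "x \<otimes> z \<in> Z" by blast
  hence "x \<otimes> z \<otimes> inv z \<in> Z" using center_sub by (meson subgroup.m_closed subgroup.m_inv_closed)
  moreover have "x \<otimes> z \<otimes> inv z = x" using z(1) x(1) Zsub by (auto simp: m_assoc)
  ultimately show False using x(2) by simp
qed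

lemma sub0: assumes x: "x \<in> carrier G" shows "Z \<union> (\<lambda>z. x \<otimes> z) ` Z \<subseteq> C x"
proof -
  have sg: "subgroup (C x) G" using centralizer_sub x by blast
  have "Z \<subseteq> C x" using center_in_cent[OF x] .
  moreover have "x \<in> C x" using x_in_cent[OF x] .
  ultimately have "x \<otimes> z \<in> C x" if "z \<in> Z" for z using subgroup.m_closed[OF sg] that by blast
  thus ?thesis using \<open>Z \<subseteq> C x\<close> by (simp add: image_subset_iff)
qed

lemma coset_disj:
  assumes "x \<in> carrier G" "y \<in> carrier G" "y \<notin> (\<lambda>z. x \<otimes> z) ` Z"
  shows "(\<lambda>z. x \<otimes> z) ` Z \<inter> (\<lambda>z. y \<otimes> z) ` Z = {}"
proof (rule ccontr)
  assume "\<not> ?thesis"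
  then obtain z1 z2 where z: "z1 \<in> Z" "z2 \<in> Z" "x \<otimes> z1 = y \<otimes> z2" by blast
  have zc: "z1 \<in> carrier G" "z2 \<in> carrier G" using z Zsub by auto
  have "z1 \<otimes> inv z2 \<in> Z" using center_sub z by (meson subgroup.m_closed subgroup.m_inv_closed)
  moreover have "y = x \<otimes> (z1 \<otimes> inv z2)"
  proof -
    have "y = y \<otimes> z2 \<otimes> inv z2" using zc assms by (simp add: m_assoc)
    also have "\<dots> = x \<otimes> z1 \<otimes> inv z2" using z(3) by simp
    also have "\<dots> = x \<otimes> (z1 \<otimes> inv z2)" using zc assms by (simp add: m_assoc)
    finally show ?thesis .
  qed
  ultimately show False using assms(3) by blast
qed

lemma k4: assumes x: "x \<in> carrier G" "x \<notin> Z" and cx: "card (C x) = n * 4" shows "card (S x) > n"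
proof -
  let ?xZ = "(\<lambda>z. x \<otimes> z) ` Z"
  have sgx: "subgroup (C x) G" using centralizer_sub x by blast
  have d: "Z \<inter> ?xZ = {}" by (rule disj0[OF x])
  have sub: "Z \<union> ?xZ \<subseteq> C x" by (rule sub0[OF x(1)])
  have c2: "card (Z \<union> ?xZ) = 2 * n"
    using card_Un_disjoint[OF finZ _ d] finZ card_lcoset[OF x(1) Zsub] by simp
  have "Z \<union> ?xZ \<noteq> C x" using c2 cx npos by auto
  then obtain y where y: "y \<in> C x" "y \<notin> Z" "y \<notin> ?xZ" using sub by blast
  have yc: "y \<in> carrier G" using y sgx subgroup.subset by blast
  have sgy: "subgroup (C y) G" using centralizer_sub yc by blast
  let ?yZ = "(\<lambda>z. y \<otimes> z) ` Z"
  let ?H = "C x \<inter> C y"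
  have sgH: "subgroup ?H G" using sgx sgy by (rule subgroups_Inter_pair)
  have xy: "x \<otimes> y = y \<otimes> x" using y(1) by (auto simp: centralizer_def)
  have xyC: "x \<in> C y" using xy x yc by (auto simp: centralizer_def)
  have ZH: "Z \<subseteq> ?H" using center_in_cent[OF x(1)] center_in_cent[OF yc] by blast
  have "x \<in> ?H" using x_in_cent[OF x(1)] xyC by blast
  hence "x \<otimes> z \<in> ?H" if "z \<in> Z" for z using subgroup.m_closed[OF sgH] that ZH by blast
  hence xZH: "?xZ \<subseteq> ?H" by (simp add: image_subset_iff)
  have "y \<in> ?H" using x_in_cent[OF yc] y(1) by blast
  hence "y \<otimes> z \<in> ?H" if "z \<in> Z" for z using subgroup.m_closed[OF sgH] that ZH by blast
  hence yZH: "?yZ \<subseteq> ?H" by (simp add: image_subset_iff)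
  have sub3: "Z \<union> ?xZ \<union> ?yZ \<subseteq> ?H" using ZH xZH yZH by blast
  have d2: "(Z \<union> ?xZ) \<inter> ?yZ = {}"
    using coset_disj[OF x(1) yc y(3)] disj0[OF yc y(2)] by blast
  have c3: "card (Z \<union> ?xZ \<union> ?yZ) = 3 * n"
    using card_Un_disjoint[OF _ _ d2] c2 finZ card_lcoset[OF yc Zsub] by simp
  have finH: "finite ?H" using finC by blast
  have "3 * n \<le> card ?H" using card_mono[OF finH sub3] c3 by simp
  moreover have "n dvd card ?H" using card_subgroup_dvd[OF center_sub sgH] center_in_cent[OF x(1)] center_in_cent[OF yc] by blast
  moreover have "card ?H dvd n * 4" using card_subgroup_dvd[OF sgH sgx Int_lower1] cx by simp
  moreover have "card ?H \<le> n * 4" using card_mono[OF finC[of x], of ?H] cx by simp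
  ultimately have "card ?H = n * 4"
  proof -
    assume a: "3 * n \<le> card ?H" "n dvd card ?H" "card ?H dvd n * 4" "card ?H \<le> n * 4"
    obtain j where j: "card ?H = n * j" using a(2) by blast
    have "j dvd 4" using a(3) j npos by (simp add: nat_mult_dvd_cancel1)
    moreover have "j \<ge> 3" using a(1) j npos by simp
    moreover have "j \<le> 4" using a(4) j npos by simp
    ultimately have "j = 4" by (cases "j = 3") auto
    thus ?thesis using j by simp
  qed
  hence "?H = C x" using card_subset_eq[OF finC[of x], of ?H] cx by simp
  hence inc: "C x \<subseteq> C y" by blast
  obtain k where k: "card (C y) = n * k" "k = 2 \<or> k = 4" using kset[OF yc y(2)] by blast
  have "card (C x) \<le> card (C y)" using card_mono[OF finC inc] .
  hence "k = 4" using k cx npos by auto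
  hence "C x = C y" using card_subset_eq[OF finC inc] k cx by simp
  hence yS: "y \<in> S x" using yc by (simp add: S_def)
  have "insert y ?xZ \<subseteq> S x" using yS coset_S[OF x(1)] by blast
  moreover have "finite (S x)" using fin by (auto simp: S_def)
  ultimately have "card (insert y ?xZ) \<le> card (S x)" by (rule card_mono[rotated])
  moreover have "card (insert y ?xZ) = n + 1" using y(3) card_lcoset[OF x(1) Zsub] finZ by simp
  ultimately show ?thesis by simp
qed


lemma one_Z: "\<one> \<in> Z" using center_sub subgroup.one_closed by blast

lemma reg_iff: "noncent_regular G \<longleftrightarrow> (\<forall>x\<in>carrier G. card (S x) = n)"
proof
  assume r: "noncent_regular G"
  show "\<forall>x\<in>carrier G. card (S x) = n"
  proof
    fix x assume x: "x \<in> carrier G"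
    have "noncent_degree G x = noncent_degree G \<one>" using r x one_closed unfolding noncent_regular_def by blast
    hence e: "order G - card (S x) = order G - card (S \<one>)" unfolding deg[OF x] deg[OF one_closed] .
    have "S \<one> = Z" using S_center one_Z by blast
    thus "card (S x) = n" using e S_le[of x] S_le[of \<one>] by arith
  qed
next
  assume a: "\<forall>x\<in>carrier G. card (S x) = n"
  show "noncent_regular G" unfolding noncent_regular_def
  proof (intro ballI)
    fix x y assume "x \<in> carrier G" "y \<in> carrier G"
    thus "noncent_degree G x = noncent_degree G y" unfolding deg[OF \<open>x \<in> carrier G\<close>] deg[OF \<open>y \<in> carrier G\<close>] using a by simp
  qed
qed

lemma main: "noncent_regular G \<longleftrightarrow> (\<forall>x\<in>carrier G - Z. group_index G (C x) = 4)"
proof -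
  have "card (S x) = n \<longleftrightarrow> group_index G (C x) = 4" if x: "x \<in> carrier G" "x \<notin> Z" for x
  proof -
    obtain k where k: "card (C x) = n * k" "k = 2 \<or> k = 4" "group_index G (C x) * k = 8"
      using kset[OF x] by blast
    show ?thesis
    proof (cases "k = 2")
      case True
      thus ?thesis using k2[OF x] k by simp
    next
      case False
      hence "k = 4" using k by simp
      thus ?thesis using k4[OF x] k by simp
    qed
  qed
  moreover have "card (S x) = n" if "x \<in> Z" for x using S_center[OF that] by simp
  ultimately show ?thesis unfolding reg_iff by (metis DiffD1 DiffD2 DiffI)
qed

end

lemma card_imod2: "card (carrier (integer_mod_group 2)) = 2"
  by (simp add: carrier_integer_mod_group)

theorem theorem2p9:
  fixes G :: "('a, 'b) monoid_scheme"
  assumes "group G"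
    and "finite (carrier G)"
    and "\<not> comm_group G"
    and "G Mod (center G) \<cong>
           (integer_mod_group 2 \<times>\<times> integer_mod_group 2 \<times>\<times> integer_mod_group 2)"
  shows "noncent_regular G \<longleftrightarrow>
           (\<forall>x \<in> carrier G - center G. group_index G (centralizer G x) = 4)"
proof -
  interpret group G by (rule assms(1))
  obtain h where h: "h \<in> iso (G Mod (center G))
       (integer_mod_group 2 \<times>\<times> integer_mod_group 2 \<times>\<times> integer_mod_group 2)"
    using assms(4) unfolding is_iso_def by blast
  hence "card (carrier (G Mod (center G))) =
      card (carrier (integer_mod_group 2 \<times>\<times> integer_mod_group 2 \<times>\<times> integer_mod_group 2))"
    unfolding iso_def using bij_betw_same_card by blast
  hence "card (rcosets\<^bsub>G\<^esub> (center G)) = 8"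
    by (simp add: FactGroup_def card_cartesian_product card_imod2)
  moreover have "card (rcosets\<^bsub>G\<^esub> (center G)) * card (center G) = order G"
    using lagrange[OF center_sub] .
  ultimately have "order G = 8 * card (center G)" by simp
  then interpret thm_ctx G using assms(2) by unfold_locales
  show ?thesis using main .
qed

end
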